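(* Let $M$ be a free $\mathbb{T}$-module with a finite $\mathbb{T}$-basis, $V$ its associated complex vector space, and $(\cdot,\cdot)$ a bicomplex scalar product on $M$ which is hyperbolic positive and closed on $V$. Then $\{M,(\cdot,\cdot)\}$ is a $\mathbb{T}$-Hilbert space if and only if $V$ with the restriction of $(\cdot,\cdot)$ is a (complex) Hilbert space.
   Context: Bicomplex numbers: $\mathbb{T}=\{z_1+z_2\mathbf{i_2}: z_1,z_2\in\mathbb{C}(\mathbf{i_1})\}$, $\mathbb{C}(\mathbf{i_1})=\{x+y\mathbf{i_1}: x,y\in\mathbb{R}\}$, $\mathbf{i_1}^2=\mathbf{i_2}^2=-1$, $\mathbf{i_1}\mathbf{i_2}=\mathbf{i_2}\mathbf{i_1}=\mathbf{j}$, $\mathbf{j}^2=1$ (commutative). Hyperbolic numbers $\mathbb{D}=\{x+y\mathbf{j}:x,y\in\mathbb{R}\}$. Idempotents $\mathbf{e_1}=(1+\mathbf{j})/2$, $\mathbf{e_2}=(1-\mathbf{j})/2$. Conjugation: $(z_1+z_2\mathbf{i_2})^{\dagger_3}=\overline{z_1}-\overline{z_2}\mathbf{i_2}$. $\mathbb{D}^+=\{a\mathbf{e_1}+b\mathbf{e_2}: a,b\ge 0\}$. $M$ has $\mathbb{T}$-basis $\{\widehat m_1,\dots,\widehat m_n\}$, $V=\{\sum x_l\widehat m_l: x_l\in\mathbb{C}(\mathbf{i_1})\}$; for $\widehat X=\sum x_l\widehat m_l$ with $x_l=x_{1l}\mathbf{e_1}+x_{2l}\mathbf{e_2}$, $x_{kl}\in\mathbb{C}(\mathbf{i_1})$,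 put $\widehat X_{\mathbf{e_k}}=\sum_l x_{kl}\widehat m_l\in V$. A bicomplex scalar product is a map $(\cdot,\cdot):M\times M\to\mathbb{T}$ with: $(\widehat X,\widehat Y_1+\widehat Y_2)=(\widehat X,\widehat Y_1)+(\widehat X,\widehat Y_2)$; $(\widehat X,\alpha\widehat Y)=\alpha(\widehat X,\widehat Y)$ for $\alpha\in\mathbb{T}$; $(\widehat X,\widehat Y)=(\widehat Y,\widehat X)^{\dagger_3}$; $(\widehat X,\widehat X)=0\iff\widehat X=0$. Hyperbolic positive: $(\widehat X,\widehat X)\in\mathbb{D}^+$ for all $\widehat X$. Closed on $V$: $(\widehat X,\widehat Y)\in\mathbb{C}(\mathbf{i_1})$ for $\widehat X,\widehat Y\in V$. For $\widehat Z\in V$, $\|\widehat Z\|=(\widehat Z,\widehat Z)^{1/2}$; for $\widehat X\in M$, $\|\widehat X\|:=\big((\|\widehat X_{\mathbf{e_1}}\|^2+\|\widehat X_{\mathbf{e_2}}\|^2)/2\big)^{1/2}$, and $d(\widehat X,\widehat Y)=\|\widehat X-\widehat Y\|$. $\{M,(\cdot,\cdot)\}$ is called a $\mathbb{T}$-Hilbert space if $M$ is complete with respect to $d$. *)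

theory Defs
  imports "HOL-Analysis.Analysis"
begin

text \<open>A bicomplex number z1 + z2 i2 with z1, z2 in C(i1); the Isabelle imaginary unit
  of type complex plays the role of i1.\<close>

datatype bicomplex = BC (bc1: complex) (bc2: complex)

instantiation bicomplex :: comm_ring_1
begin
definition "0 = BC 0 0"
definition "1 = BC 1 0"
definition "x + y = BC (bc1 x + bc1 y) (bc2 x + bc2 y)"
definition "x - y = BC (bc1 x - bc1 y) (bc2 x - bc2 y)"
definition "- x = BC (- bc1 x) (- bc2 x)"
definition "x * y = BC (bc1 x * bc1 y - bc2 x * bc2 y) (bc1 x * bc2 y + bc2 x * bc1 y)"
instance
  by standard
     (auto simp: zero_bicomplex_def one_bicomplex_def plus_bicomplex_def
        minus_bicomplex_def uminus_bicomplex_def times_bicomplex_def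
        algebra_simps intro!: bicomplex.expand)
end

definition of_ci1 :: "complex \<Rightarrow> bicomplex" where
  "of_ci1 z = BC z 0"

definition Ci1 :: "bicomplex set" where
  "Ci1 = {BC z 0 | z. True}"

definition bc_i1 :: bicomplex where "bc_i1 = BC \<i> 0"
definition bc_i2 :: bicomplex where "bc_i2 = BC 0 1"
definition bc_j :: bicomplex where "bc_j = bc_i1 * bc_i2"

definition bc_e1 :: bicomplex where "bc_e1 = (1 + bc_j) * BC (1/2) 0"
definition bc_e2 :: bicomplex where "bc_e2 = (1 - bc_j) * BC (1/2) 0"

definition hyperbolic :: "bicomplex set" where
  "hyperbolic = {of_ci1 (complex_of_real x) + of_ci1 (complex_of_real y) * bc_j | x y. True}"

definition hyperbolic_pos :: "bicomplex set" where
  "hyperbolic_pos = {of_ci1 (complex_of_real a) * bc_e1 + of_ci1 (complex_of_real b) * bc_e2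
                      | a b. a \<ge> 0 \<and> b \<ge> 0}"

definition conj3 :: "bicomplex \<Rightarrow> bicomplex" where
  "conj3 x = BC (cnj (bc1 x)) (- cnj (bc2 x))"

text \<open>Idempotent components: x = idem1 x e1 + idem2 x e2 with idem_k x in C(i1),
  i.e. idem1 (z1 + z2 i2) = z1 - i1 z2, idem2 (z1 + z2 i2) = z1 + i1 z2.\<close>
definition idem1 :: "bicomplex \<Rightarrow> complex" where
  "idem1 x = bc1 x - \<i> * bc2 x"
definition idem2 :: "bicomplex \<Rightarrow> complex" where
  "idem2 x = bc1 x + \<i> * bc2 x"

text \<open>M is the carrier type 'm with T-scalar multiplication sc; B is a finite T-basis.\<close>
definition free_T_module_fin_basis ::
  "(bicomplex \<Rightarrow> 'm::ab_group_add \<Rightarrow> 'm) \<Rightarrow> 'm set \<Rightarrow> bool" where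
  "free_T_module_fin_basis sc B \<longleftrightarrow>
     module sc \<and> finite B \<and> module.independent sc B \<and> module.span sc B = UNIV"

definition assoc_V :: "(bicomplex \<Rightarrow> 'm::ab_group_add \<Rightarrow> 'm) \<Rightarrow> 'm set \<Rightarrow> 'm set" where
  "assoc_V sc B = {(\<Sum>b\<in>B. sc (of_ci1 (x b)) b) | x. True}"

text \<open>X_{e1}, X_{e2}: X = sum x_l m_l, x_l = x_{1l} e1 + x_{2l} e2, X_{ek} = sum x_{kl} m_l.\<close>
definition comp_e1 :: "(bicomplex \<Rightarrow> 'm::ab_group_add \<Rightarrow> 'm) \<Rightarrow> 'm set \<Rightarrow> 'm \<Rightarrow> 'm" where
  "comp_e1 sc B X = (\<Sum>b\<in>B. sc (of_ci1 (idem1 (module.representation sc B X b))) b)"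
definition comp_e2 :: "(bicomplex \<Rightarrow> 'm::ab_group_add \<Rightarrow> 'm) \<Rightarrow> 'm set \<Rightarrow> 'm \<Rightarrow> 'm" where
  "comp_e2 sc B X = (\<Sum>b\<in>B. sc (of_ci1 (idem2 (module.representation sc B X b))) b)"

definition bicomplex_scalar_product ::
  "(bicomplex \<Rightarrow> 'm::ab_group_add \<Rightarrow> 'm) \<Rightarrow> ('m \<Rightarrow> 'm \<Rightarrow> bicomplex) \<Rightarrow> bool" where
  "bicomplex_scalar_product sc ip \<longleftrightarrow>
     (\<forall>X Y1 Y2. ip X (Y1 + Y2) = ip X Y1 + ip X Y2) \<and>
     (\<forall>X Y \<alpha>. ip X (sc \<alpha> Y) = \<alpha> * ip X Y) \<and>
     (\<forall>X Y. ip X Y = conj3 (ip Y X)) \<and>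
     (\<forall>X. ip X X = 0 \<longleftrightarrow> X = 0)"

definition hyperbolic_positive :: "('m \<Rightarrow> 'm \<Rightarrow> bicomplex) \<Rightarrow> bool" where
  "hyperbolic_positive ip \<longleftrightarrow> (\<forall>X. ip X X \<in> hyperbolic_pos)"

definition closed_on :: "('m \<Rightarrow> 'm \<Rightarrow> bicomplex) \<Rightarrow> 'm set \<Rightarrow> bool" where
  "closed_on ip V \<longleftrightarrow> (\<forall>X\<in>V. \<forall>Y\<in>V. ip X Y \<in> Ci1)"

text \<open>Norm on V: ||Z|| = (Z,Z)^(1/2) (the value (Z,Z) lies in C(i1); we take the
  square root of its real part, which is (Z,Z) itself under the hypotheses).\<close>
definition normV :: "('m \<Rightarrow> 'm \<Rightarrow> bicomplex) \<Rightarrow> 'm \<Rightarrow> real" where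
  "normV ip Z = sqrt (Re (bc1 (ip Z Z)))"

definition normM ::
  "(bicomplex \<Rightarrow> 'm::ab_group_add \<Rightarrow> 'm) \<Rightarrow> 'm set \<Rightarrow> ('m \<Rightarrow> 'm \<Rightarrow> bicomplex) \<Rightarrow> 'm \<Rightarrow> real" where
  "normM sc B ip X =
     sqrt (((normV ip (comp_e1 sc B X))\<^sup>2 + (normV ip (comp_e2 sc B X))\<^sup>2) / 2)"

definition complete_wrt :: "'a set \<Rightarrow> ('a \<Rightarrow> 'a \<Rightarrow> real) \<Rightarrow> bool" where
  "complete_wrt S d \<longleftrightarrow>
     (\<forall>f. (\<forall>n. f n \<in> S) \<longrightarrow>
          (\<forall>\<epsilon>::real>0. \<exists>N::nat. \<forall>m\<ge>N. \<forall>n\<ge>N. d (f m) (f n) < \<epsilon>) \<longrightarrow>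
          (\<exists>x\<in>S. \<forall>\<epsilon>::real>0. \<exists>N::nat. \<forall>n\<ge>N. d (f n) x < \<epsilon>))"

definition T_Hilbert_space ::
  "(bicomplex \<Rightarrow> 'm::ab_group_add \<Rightarrow> 'm) \<Rightarrow> 'm set \<Rightarrow> ('m \<Rightarrow> 'm \<Rightarrow> bicomplex) \<Rightarrow> bool" where
  "T_Hilbert_space sc B ip \<longleftrightarrow>
     bicomplex_scalar_product sc ip \<and>
     complete_wrt UNIV (\<lambda>X Y. normM sc B ip (X - Y))"

text \<open>V (a complex vector space with scalar multiplication z Z = sc (of_ci1 z) Z)
  together with the restricted scalar product (values read in C(i1)) is a complex
  Hilbert space: a complex inner product space (linear in the second argument,
  conjugate symmetric, positive definite) that is complete in the induced norm.\<close>
definition complex_Hilbert_space ::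
  "(bicomplex \<Rightarrow> 'm::ab_group_add \<Rightarrow> 'm) \<Rightarrow> 'm set \<Rightarrow> ('m \<Rightarrow> 'm \<Rightarrow> bicomplex) \<Rightarrow> bool" where
  "complex_Hilbert_space sc V ip \<longleftrightarrow>
     (0 \<in> V) \<and> (\<forall>X\<in>V. \<forall>Y\<in>V. X + Y \<in> V) \<and> (\<forall>z. \<forall>X\<in>V. sc (of_ci1 z) X \<in> V) \<and>
     (\<forall>X\<in>V. \<forall>Y\<in>V. ip X Y \<in> Ci1) \<and>
     (\<forall>X\<in>V. \<forall>Y1\<in>V. \<forall>Y2\<in>V. bc1 (ip X (Y1 + Y2)) = bc1 (ip X Y1) + bc1 (ip X Y2)) \<and>
     (\<forall>X\<in>V. \<forall>Y\<in>V. \<forall>z. bc1 (ip X (sc (of_ci1 z) Y)) = z * bc1 (ip X Y)) \<and>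
     (\<forall>X\<in>V. \<forall>Y\<in>V. bc1 (ip X Y) = cnj (bc1 (ip Y X))) \<and>
     (\<forall>X\<in>V. Im (bc1 (ip X X)) = 0 \<and> Re (bc1 (ip X X)) \<ge> 0) \<and>
     (\<forall>X\<in>V. bc1 (ip X X) = 0 \<longleftrightarrow> X = 0) \<and>
     complete_wrt V (\<lambda>X Y. normV ip (X - Y))"

end

theory Submission imports Defs begin

lemma bc_simps[simp]:
  "bc1 (x + y) = bc1 x + bc1 y" "bc2 (x + y) = bc2 x + bc2 y"
  "bc1 (x - y) = bc1 x - bc1 y" "bc2 (x - y) = bc2 x - bc2 y"
  "bc1 (x * y) = bc1 x * bc1 y - bc2 x * bc2 y" "bc2 (x * y) = bc1 x * bc2 y + bc2 x * bc1 y"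
  "bc1 0 = 0" "bc2 0 = 0" "bc1 1 = 1" "bc2 1 = 0"
  by (simp_all add: plus_bicomplex_def minus_bicomplex_def times_bicomplex_def
      zero_bicomplex_def one_bicomplex_def)

lemma e1_eq: "bc_e1 = BC (1/2) (\<i>/2)"
  by (rule bicomplex.expand) (simp add: bc_e1_def bc_j_def bc_i1_def bc_i2_def)
lemma e2_eq: "bc_e2 = BC (1/2) (-\<i>/2)"
  by (rule bicomplex.expand) (simp add: bc_e2_def bc_j_def bc_i1_def bc_i2_def)

lemma idem1_ofci: "idem1 (of_ci1 z) = z" by (simp add: idem1_def of_ci1_def)
lemma idem2_ofci: "idem2 (of_ci1 z) = z" by (simp add: idem2_def of_ci1_def)
lemma idem1_comb: "idem1 (bc_e1 * of_ci1 z + bc_e2 * of_ci1 w) = z"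
  by (simp add: idem1_def of_ci1_def e1_eq e2_eq field_simps)
lemma idem2_comb: "idem2 (bc_e1 * of_ci1 z + bc_e2 * of_ci1 w) = w"
  by (simp add: idem2_def of_ci1_def e1_eq e2_eq field_simps)
lemma idem1_diff: "idem1 (x - y) = idem1 x - idem1 y" by (simp add: idem1_def algebra_simps)
lemma idem2_diff: "idem2 (x - y) = idem2 x - idem2 y" by (simp add: idem2_def algebra_simps)
lemma ofci_diff: "of_ci1 (x - y) = of_ci1 x - of_ci1 y"
  by (rule bicomplex.expand) (simp add: of_ci1_def)
lemma ofci_mult: "of_ci1 (x * y) = of_ci1 x * of_ci1 y"
  by (rule bicomplex.expand) (simp add: of_ci1_def)
lemma ofci_0: "of_ci1 0 = 0"
  by (rule bicomplex.expand) (simp add: of_ci1_def)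

lemma hp_form:
  assumes "x \<in> hyperbolic_pos"
  obtains a b :: real where "a \<ge> 0" "b \<ge> 0" "x = BC ((a+b)/2) (\<i>*(a-b)/2)"
proof -
  from assms obtain a b :: real where ab: "a \<ge> 0" "b \<ge> 0"
    "x = of_ci1 (complex_of_real a) * bc_e1 + of_ci1 (complex_of_real b) * bc_e2"
    unfolding hyperbolic_pos_def by blast
  have "x = BC ((a+b)/2) (\<i>*(a-b)/2)"
    unfolding ab(3) by (rule bicomplex.expand) (simp add: of_ci1_def e1_eq e2_eq field_simps)
  with ab that show ?thesis by blast
qed

lemma hp_props:
  assumes "x \<in> hyperbolic_pos"
  shows "Im (bc1 x) = 0" "Re (bc1 x) \<ge> 0" "bc1 x = 0 \<longleftrightarrow> x = 0"
proof -
  obtain a b :: real where ab: "a \<ge> 0" "b \<ge> 0" "x = BC ((a+b)/2) (\<i>*(a-b)/2)"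
    using hp_form[OF assms] by blast
  show "Im (bc1 x) = 0" "Re (bc1 x) \<ge> 0" using ab by auto
  show "bc1 x = 0 \<longleftrightarrow> x = 0"
  proof
    assume "bc1 x = 0"
    then have "a + b = 0" using ab by (simp add: complex_eq_iff)
    then have "a = 0" "b = 0" using ab by auto
    then show "x = 0" using ab by (simp add: zero_bicomplex_def)
  qed simp
qed

lemma Ci1_iff: "x \<in> Ci1 \<longleftrightarrow> bc2 x = 0"
  unfolding Ci1_def by (cases x) auto

context
  fixes sc :: "bicomplex \<Rightarrow> 'm::ab_group_add \<Rightarrow> 'm" and B :: "'m set"
  assumes free: "free_T_module_fin_basis sc B"
begin

interpretation m: module sc using free unfolding free_T_module_fin_basis_def by blast

lemma finB: "finite B" and indB: "m.independent B" and spanB: "m.span B = UNIV"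
  using free unfolding free_T_module_fin_basis_def by auto

lemma rep_sum: "b' \<in> B \<Longrightarrow> m.representation B (\<Sum>b\<in>B. sc (c b) b) b' = c b'"
proof -
  assume b': "b' \<in> B"
  have "m.representation B (\<Sum>b\<in>B. sc (c b) b) b' = (\<Sum>b\<in>B. m.representation B (sc (c b) b) b')"
    using m.representation_sum[OF indB, of B "\<lambda>b. sc (c b) b"] spanB by simp
  also have "\<dots> = (\<Sum>b\<in>B. c b * (if b' = b then 1 else 0))"
    apply (rule sum.cong, simp)
    using m.representation_scale[OF indB] m.representation_basis[OF indB] m.span_base
    by simp
  also have "\<dots> = c b'" using b' finB by (simp add: if_distrib cong: if_cong)
  finally show ?thesis .
qed

lemma X_repr: "(\<Sum>b\<in>B. sc (m.representation B X b) b) = X"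
  using m.sum_representation_eq[OF indB _ finB] spanB by simp

lemma comp_e1_sum: "comp_e1 sc B (\<Sum>b\<in>B. sc (c b) b) = (\<Sum>b\<in>B. sc (of_ci1 (idem1 (c b))) b)"
  unfolding comp_e1_def by (rule sum.cong) (simp_all add: rep_sum)
lemma comp_e2_sum: "comp_e2 sc B (\<Sum>b\<in>B. sc (c b) b) = (\<Sum>b\<in>B. sc (of_ci1 (idem2 (c b))) b)"
  unfolding comp_e2_def by (rule sum.cong) (simp_all add: rep_sum)

lemma comp_e1_diff: "comp_e1 sc B (X - Y) = comp_e1 sc B X - comp_e1 sc B Y"
  unfolding comp_e1_def using m.representation_diff[OF indB, of Y X] spanB
  by (simp add: idem1_diff ofci_diff m.scale_left_diff_distrib sum_subtractf)
lemma comp_e2_diff: "comp_e2 sc B (X - Y) = comp_e2 sc B X - comp_e2 sc B Y"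
  unfolding comp_e2_def using m.representation_diff[OF indB, of Y X] spanB
  by (simp add: idem2_diff ofci_diff m.scale_left_diff_distrib sum_subtractf)

lemma V_comp: "Z \<in> assoc_V sc B \<Longrightarrow> comp_e1 sc B Z = Z \<and> comp_e2 sc B Z = Z"
  unfolding assoc_V_def by (auto simp: comp_e1_sum comp_e2_sum idem1_ofci idem2_ofci)

lemma comp_in_V: "comp_e1 sc B X \<in> assoc_V sc B" "comp_e2 sc B X \<in> assoc_V sc B"
  unfolding assoc_V_def comp_e1_def comp_e2_def
  by (rule CollectI, rule exI[of _ "\<lambda>b. idem1 (m.representation B X b)"], simp)
     (rule CollectI, rule exI[of _ "\<lambda>b. idem2 (m.representation B X b)"], simp)

lemma V_diff: "Z \<in> assoc_V sc B \<Longrightarrow> W \<in> assoc_V sc B \<Longrightarrow> Z - W \<in> assoc_V sc B"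
proof -
  assume "Z \<in> assoc_V sc B" "W \<in> assoc_V sc B"
  then obtain x y where xy: "Z = (\<Sum>b\<in>B. sc (of_ci1 (x b)) b)" "W = (\<Sum>b\<in>B. sc (of_ci1 (y b)) b)"
    unfolding assoc_V_def by blast
  have "Z - W = (\<Sum>b\<in>B. sc (of_ci1 (x b - y b)) b)"
    unfolding xy by (simp add: ofci_diff m.scale_left_diff_distrib sum_subtractf)
  then show ?thesis unfolding assoc_V_def by (intro CollectI exI[of _ "\<lambda>b. x b - y b"]) simp
qed

lemma V_zero: "0 \<in> assoc_V sc B"
  unfolding assoc_V_def by (rule CollectI, rule exI[of _ "\<lambda>_. 0"]) (simp add: ofci_0)

lemma V_add: "Z \<in> assoc_V sc B \<Longrightarrow> W \<in> assoc_V sc B \<Longrightarrow> Z + W \<in> assoc_V sc B"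
  using V_diff[of 0 W] V_diff[of Z "0 - W"] V_zero by simp

lemma V_scale: "Z \<in> assoc_V sc B \<Longrightarrow> sc (of_ci1 z) Z \<in> assoc_V sc B"
proof -
  assume "Z \<in> assoc_V sc B"
  then obtain x where x: "Z = (\<Sum>b\<in>B. sc (of_ci1 (x b)) b)"
    unfolding assoc_V_def by blast
  have "sc (of_ci1 z) Z = (\<Sum>b\<in>B. sc (of_ci1 (z * x b)) b)"
    unfolding x by (simp add: m.scale_sum_right ofci_mult)
  then show ?thesis unfolding assoc_V_def by (intro CollectI exI[of _ "\<lambda>b. z * x b"]) simp
qed

lemma recombine:
  assumes "Z1 \<in> assoc_V sc B" "Z2 \<in> assoc_V sc B"
  shows "comp_e1 sc B (sc bc_e1 Z1 + sc bc_e2 Z2) = Z1 \<and> comp_e2 sc B (sc bc_e1 Z1 + sc bc_e2 Z2) = Z2"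
proof -
  obtain x y where xy: "Z1 = (\<Sum>b\<in>B. sc (of_ci1 (x b)) b)" "Z2 = (\<Sum>b\<in>B. sc (of_ci1 (y b)) b)"
    using assms unfolding assoc_V_def by blast
  have "sc bc_e1 Z1 + sc bc_e2 Z2 = (\<Sum>b\<in>B. sc (bc_e1 * of_ci1 (x b) + bc_e2 * of_ci1 (y b)) b)"
    unfolding xy by (simp add: m.scale_sum_right m.scale_left_distrib sum.distrib)
  then show ?thesis by (simp add: comp_e1_sum comp_e2_sum idem1_comb idem2_comb xy)
qed

end
lemma sq_small:
  fixes a b e :: real
  assumes "a \<ge> 0" "b \<ge> 0" "e > 0" "sqrt ((a\<^sup>2 + b\<^sup>2)/2) < e/2"
  shows "a < e \<and> b < e"
proof -
  let ?x = "(a\<^sup>2 + b\<^sup>2)/2"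
  have x0: "?x \<ge> 0" by simp
  have "(sqrt ?x)\<^sup>2 < (e/2)\<^sup>2"
    by (rule power_strict_mono[OF assms(4)]) simp_all
  then have "?x < (e/2)\<^sup>2" using x0 by simp
  then have "a\<^sup>2 < e\<^sup>2" "b\<^sup>2 < e\<^sup>2"
    using zero_le_power2[of a] zero_le_power2[of b] zero_le_power2[of e]
    by (simp_all add: power_divide, linarith+)
  then show ?thesis using assms(1,2,3) by (simp add: power2_less_imp_less)
qed

lemma sq_lt:
  fixes a b e :: real
  assumes "a \<ge> 0" "b \<ge> 0" "a < e" "b < e"
  shows "sqrt ((a\<^sup>2 + b\<^sup>2)/2) < e"
proof -
  have "a\<^sup>2 < e\<^sup>2" "b\<^sup>2 < e\<^sup>2" using assms by (simp_all add: power_strict_mono)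
  then have "(a\<^sup>2 + b\<^sup>2)/2 < e\<^sup>2" by simp
  then have "sqrt ((a\<^sup>2 + b\<^sup>2)/2) < sqrt (e\<^sup>2)" by (simp only: real_sqrt_less_iff)
  then show ?thesis using assms by simp
qed
theorem mainTheorem15:
  fixes sc :: "bicomplex \<Rightarrow> 'm::ab_group_add \<Rightarrow> 'm"
    and B :: "'m set"
    and ip :: "'m \<Rightarrow> 'm \<Rightarrow> bicomplex"
  assumes "free_T_module_fin_basis sc B"
    and "bicomplex_scalar_product sc ip"
    and "hyperbolic_positive ip"
    and "closed_on ip (assoc_V sc B)"
  shows "T_Hilbert_space sc B ip \<longleftrightarrow> complex_Hilbert_space sc (assoc_V sc B) ip"
proof -
  note free = assms(1)
  define V where "V = assoc_V sc B"
  define c1 where "c1 = comp_e1 sc B"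
  define c2 where "c2 = comp_e2 sc B"
  define nV where "nV = normV ip"
  define nM where "nM = normM sc B ip"
  have add: "\<And>X Y1 Y2. ip X (Y1 + Y2) = ip X Y1 + ip X Y2"
    and scl: "\<And>X Y a. ip X (sc a Y) = a * ip X Y"
    and sym: "\<And>X Y. ip X Y = conj3 (ip Y X)"
    and def0: "\<And>X. ip X X = 0 \<longleftrightarrow> X = 0"
    using assms(2) unfolding bicomplex_scalar_product_def by blast+
  have hp: "\<And>X. ip X X \<in> hyperbolic_pos" using assms(3) unfolding hyperbolic_positive_def by blast
  have nVnn: "\<And>Z. nV Z \<ge> 0" unfolding nV_def normV_def using hp_props(2)[OF hp] by simp
  have nMdef: "\<And>W. nM W = sqrt (((nV (c1 W))\<^sup>2 + (nV (c2 W))\<^sup>2)/2)"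
    unfolding nM_def normM_def nV_def c1_def c2_def ..
  have c1d: "\<And>X Y. c1 (X - Y) = c1 X - c1 Y" unfolding c1_def using comp_e1_diff[OF free] .
  have c2d: "\<And>X Y. c2 (X - Y) = c2 X - c2 Y" unfolding c2_def using comp_e2_diff[OF free] .
  have cV: "\<And>X. c1 X \<in> V" "\<And>X. c2 X \<in> V" unfolding c1_def c2_def V_def using comp_in_V[OF free] by auto
  have Vc: "\<And>Z. Z \<in> V \<Longrightarrow> c1 Z = Z \<and> c2 Z = Z" unfolding c1_def c2_def V_def using V_comp[OF free] by auto
  have Vd: "\<And>Z W. Z \<in> V \<Longrightarrow> W \<in> V \<Longrightarrow> Z - W \<in> V" unfolding V_def using V_diff[OF free] by auto
  have nMV: "\<And>W. W \<in> V \<Longrightarrow> nM W = nV W"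
    using Vc nVnn by (simp add: nMdef)
  have small: "\<And>W e. e > 0 \<Longrightarrow> nM W < e/2 \<Longrightarrow> nV (c1 W) < e \<and> nV (c2 W) < e"
    using sq_small[OF nVnn nVnn] nMdef by simp
  have lt: "\<And>W e. nV (c1 W) < e \<Longrightarrow> nV (c2 W) < e \<Longrightarrow> nM W < e"
    using sq_lt[OF nVnn nVnn] nMdef by simp
  have compl: "complete_wrt UNIV (\<lambda>X Y. nM (X - Y)) \<longleftrightarrow> complete_wrt V (\<lambda>X Y. nV (X - Y))"
  proof
    assume cM: "complete_wrt UNIV (\<lambda>X Y. nM (X - Y))"
    show "complete_wrt V (\<lambda>X Y. nV (X - Y))"
      unfolding complete_wrt_def
    proof (intro allI impI)
      fix f :: "nat \<Rightarrow> 'm" assume fV: "\<forall>n. f n \<in> V"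
        and cau: "\<forall>e>0. \<exists>N. \<forall>m\<ge>N. \<forall>n\<ge>N. nV (f m - f n) < e"
      have cM': "\<forall>e>0. \<exists>N. \<forall>m\<ge>N. \<forall>n\<ge>N. nM (f m - f n) < e"
      proof -
        have eq: "\<And>m n. nM (f m - f n) = nV (f m - f n)" using fV by (simp add: nMV Vd)
        show ?thesis unfolding eq using cau .
      qed
      have gen: "\<And>g :: nat \<Rightarrow> 'm. (\<forall>e>0. \<exists>N. \<forall>m\<ge>N. \<forall>n\<ge>N. nM (g m - g n) < e) \<Longrightarrow>
          (\<exists>z\<in>UNIV. \<forall>e>0. \<exists>N. \<forall>n\<ge>N. nM (g n - z) < e)" using cM unfolding complete_wrt_def by blast
      from gen[OF cM'] obtain x where x: "\<forall>e>0. \<exists>N. \<forall>n\<ge>N. nM (f n - x) < e" by blast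
      have "\<forall>e>0. \<exists>N. \<forall>n\<ge>N. nV (f n - c1 x) < e"
      proof (intro allI impI)
        fix e :: real assume e: "e > 0"
        have e2: "e/2 > 0" using e by simp
        obtain N where N: "\<forall>n\<ge>N. nM (f n - x) < e/2" using x e2 by blast
        have "\<forall>n\<ge>N. nV (f n - c1 x) < e"
        proof (intro allI impI)
          fix n assume "n \<ge> N"
          then have "nM (f n - x) < e/2" using N by blast
          then have "nV (c1 (f n - x)) < e" using small[OF e] by blast
          moreover have "c1 (f n - x) = f n - c1 x" using Vc[OF fV[rule_format]] by (simp add: c1d)
          ultimately show "nV (f n - c1 x) < e" by simp
        qed
        then show "\<exists>N. \<forall>n\<ge>N. nV (f n - c1 x) < e" by blast
      qed
      then show "\<exists>x\<in>V. \<forall>e>0. \<exists>N. \<forall>n\<ge>N. nV (f n - x) < e" using cV by blast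
    qed
  next
    assume cV': "complete_wrt V (\<lambda>X Y. nV (X - Y))"
    show "complete_wrt UNIV (\<lambda>X Y. nM (X - Y))"
      unfolding complete_wrt_def
    proof (intro allI impI)
      fix f :: "nat \<Rightarrow> 'm" assume cau: "\<forall>e>0. \<exists>N. \<forall>m\<ge>N. \<forall>n\<ge>N. nM (f m - f n) < e"
      have cauk: "\<forall>e>0. \<exists>N. \<forall>m\<ge>N. \<forall>n\<ge>N. nV (c1 (f m) - c1 (f n)) < e \<and> nV (c2 (f m) - c2 (f n)) < e"
      proof (intro allI impI)
        fix e :: real assume e: "e > 0"
        have e2: "e/2 > 0" using e by simp
        obtain N where N: "\<forall>m\<ge>N. \<forall>n\<ge>N. nM (f m - f n) < e/2" using cau e2 by blast
        show "\<exists>N. \<forall>m\<ge>N. \<forall>n\<ge>N. nV (c1 (f m) - c1 (f n)) < e \<and> nV (c2 (f m) - c2 (f n)) < e"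
        proof (intro exI allI impI)
          fix m n assume "m \<ge> N" "n \<ge> N"
          then have "nM (f m - f n) < e/2" using N by blast
          then have "nV (c1 (f m - f n)) < e \<and> nV (c2 (f m - f n)) < e" using small[OF e] by blast
          then show "nV (c1 (f m) - c1 (f n)) < e \<and> nV (c2 (f m) - c2 (f n)) < e" by (simp only: c1d c2d)
        qed
      qed
      have cau1: "\<forall>e>0. \<exists>N. \<forall>m\<ge>N. \<forall>n\<ge>N. nV (c1 (f m) - c1 (f n)) < e"
      proof (intro allI impI)
        fix e :: real assume "e > 0"
        then obtain N where "\<forall>m\<ge>N. \<forall>n\<ge>N. nV (c1 (f m) - c1 (f n)) < e \<and> nV (c2 (f m) - c2 (f n)) < e"
          using cauk by blast
        then show "\<exists>N. \<forall>m\<ge>N. \<forall>n\<ge>N. nV (c1 (f m) - c1 (f n)) < e" by blast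
      qed
      have cau2: "\<forall>e>0. \<exists>N. \<forall>m\<ge>N. \<forall>n\<ge>N. nV (c2 (f m) - c2 (f n)) < e"
      proof (intro allI impI)
        fix e :: real assume "e > 0"
        then obtain N where "\<forall>m\<ge>N. \<forall>n\<ge>N. nV (c1 (f m) - c1 (f n)) < e \<and> nV (c2 (f m) - c2 (f n)) < e"
          using cauk by blast
        then show "\<exists>N. \<forall>m\<ge>N. \<forall>n\<ge>N. nV (c2 (f m) - c2 (f n)) < e" by blast
      qed
      have in1: "\<forall>n. c1 (f n) \<in> V" "\<forall>n. c2 (f n) \<in> V" using cV by blast+
      have gen: "\<And>g :: nat \<Rightarrow> 'm. (\<forall>n. g n \<in> V) \<Longrightarrow> (\<forall>e>0. \<exists>N. \<forall>m\<ge>N. \<forall>n\<ge>N. nV (g m - g n) < e) \<Longrightarrow>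
          (\<exists>z\<in>V. \<forall>e>0. \<exists>N. \<forall>n\<ge>N. nV (g n - z) < e)" using cV' unfolding complete_wrt_def by blast
      from gen[OF in1(1) cau1] obtain z1 where z1: "z1 \<in> V" "\<forall>e>0. \<exists>N. \<forall>n\<ge>N. nV (c1 (f n) - z1) < e" by blast
      from gen[OF in1(2) cau2] obtain z2 where z2: "z2 \<in> V" "\<forall>e>0. \<exists>N. \<forall>n\<ge>N. nV (c2 (f n) - z2) < e" by blast
      define X where "X = sc bc_e1 z1 + sc bc_e2 z2"
      have cX: "c1 X = z1" "c2 X = z2" using recombine[OF free, of z1 z2] z1 z2
        unfolding X_def c1_def c2_def V_def by auto
      have "\<forall>e>0. \<exists>N. \<forall>n\<ge>N. nM (f n - X) < e"
      proof (intro allI impI)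
        fix e :: real assume e: "e > 0"
        obtain N1 where N1: "\<forall>n\<ge>N1. nV (c1 (f n) - z1) < e" using z1 e by blast
        obtain N2 where N2: "\<forall>n\<ge>N2. nV (c2 (f n) - z2) < e" using z2 e by blast
        have "\<forall>n\<ge>max N1 N2. nM (f n - X) < e"
        proof (intro allI impI)
          fix n assume "n \<ge> max N1 N2"
          then have "nV (c1 (f n) - z1) < e" "nV (c2 (f n) - z2) < e" using N1 N2 by auto
          moreover have "c1 (f n - X) = c1 (f n) - z1" "c2 (f n - X) = c2 (f n) - z2"
            by (simp_all only: c1d c2d cX)
          ultimately show "nM (f n - X) < e" using lt by metis
        qed
        then show "\<exists>N. \<forall>n\<ge>N. nM (f n - X) < e" by blast
      qed
      then show "\<exists>x\<in>UNIV. \<forall>e>0. \<exists>N. \<forall>n\<ge>N. nM (f n - x) < e" by blast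
    qed
  qed
  have ci: "\<And>X Y. X \<in> V \<Longrightarrow> Y \<in> V \<Longrightarrow> ip X Y \<in> Ci1"
    using assms(4) unfolding closed_on_def V_def by blast
  have h1: "0 \<in> V" using V_zero[OF free] unfolding V_def .
  have h2: "\<forall>X\<in>V. \<forall>Y\<in>V. X + Y \<in> V" using V_add[OF free] unfolding V_def by blast
  have h3: "\<forall>z. \<forall>X\<in>V. sc (of_ci1 z) X \<in> V" using V_scale[OF free] unfolding V_def by blast
  have h4: "\<forall>X\<in>V. \<forall>Y\<in>V. ip X Y \<in> Ci1" using ci by blast
  have h5: "\<forall>X\<in>V. \<forall>Y1\<in>V. \<forall>Y2\<in>V. bc1 (ip X (Y1 + Y2)) = bc1 (ip X Y1) + bc1 (ip X Y2)"
    by (simp only: add bc_simps) blast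
  have h6: "\<forall>X\<in>V. \<forall>Y\<in>V. \<forall>z. bc1 (ip X (sc (of_ci1 z) Y)) = z * bc1 (ip X Y)"
    by (simp add: scl of_ci1_def)
  have h7: "\<forall>X\<in>V. \<forall>Y\<in>V. bc1 (ip X Y) = cnj (bc1 (ip Y X))"
  proof (intro ballI)
    fix X Y show "bc1 (ip X Y) = cnj (bc1 (ip Y X))" using sym[of X Y] by (simp add: conj3_def)
  qed
  have h8: "\<forall>X\<in>V. Im (bc1 (ip X X)) = 0 \<and> Re (bc1 (ip X X)) \<ge> 0"
    using hp_props(1,2)[OF hp] by blast
  have h9: "\<forall>X\<in>V. bc1 (ip X X) = 0 \<longleftrightarrow> X = 0"
  proof (intro ballI)
    fix X show "bc1 (ip X X) = 0 \<longleftrightarrow> X = 0" using hp_props(3)[OF hp, of X] def0[of X] by simp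
  qed
  have H: "complex_Hilbert_space sc V ip \<longleftrightarrow> complete_wrt V (\<lambda>X Y. nV (X - Y))"
    unfolding complex_Hilbert_space_def nV_def using h1 h2 h3 h4 h5 h6 h7 h8 h9 by blast
  show ?thesis
    unfolding T_Hilbert_space_def H[unfolded V_def] using assms(2) compl
    unfolding nM_def nV_def V_def by simp
qed
end
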